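(* Let $r\ge 3$ and let $T=T_0\oplus T_1$ be a finite-dimensional nilpotent module over the preprojective algebra $\Lambda$ of the graph with two vertices $0,1$ joined by $r$ edges, with graded socle filtration $0=U_0\subset U_1\subset U_2\subset\cdots$. Suppose $1\le j<k$ with $k-j$ even, and suppose the subquotient $U_k/U_j$ has a submodule of dimension vector $a\,\alpha_j+b\,\alpha_{j+1}$. Then $U_{k-1}/U_{j-1}$ has a submodule of dimension vector $b\,\alpha_{j+1}+c\,\alpha_j$ for some integer $c\le rb-a$. If moreover $j\ge 2$, then $c\ge b/r$.
   Context: Setup: $r\ge3$, $I=\{0,1\}$, Cartan matrix $\begin{pmatrix}2&-r\\-r&2\end{pmatrix}$, simple roots $\alpha_0,\alpha_1$. The graph has vertices $0,1$ and $r$ edges between them; the double quiver has arrows $0\to1$ and $1\to0$, one of each per edge, $\bar a$ denoting the reverse of $a$. Fix an orientation $\Omega$ (one arrow per edge), $\varepsilon(a)=\pm1$ according to $a\in\Omega$ or not. $\Lambda$ is the path algebra modulo the ideal generated by $\sum_a\varepsilon(a)\bar a a$. A $\Lambda$-module $T=T_0\oplus T_1$ is given by linear maps $x_a:T_{s(a)}\to T_{t(a)}$ for each arrow; nilpotent means all long enough paths act by $0$. The dimension vector of a graded module $S$ is $\dim S_0\,\alpha_0+\dim S_1\,\alpha_1$. For an index $k\ge1$, write $\alpha_k=\alpha_1$ if $k$ is odd and $\alpha_k=\alpha_0$ if $k$ is even, and similarly the vertex of $k$ is $1$ for $k$ odd, $0$ for $k$ even. The graded socle filtration is defined by $U_0=0$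 and, for $k\ge1$ with vertex $i$, $U_k=U_{k-1}+\{v\in T_i: x_a(v)\in U_{k-1}\text{ for all arrows }a\text{ with }s(a)=i\}$ (so $U_1=\mathrm{Soc}(T)\cap T_1$). Each $U_k$ is a submodule. *)

theory Defs
  imports Complex_Main
begin

text \<open>
A graded module T = T0 (+) T1 over the preprojective algebra of the
graph with vertices 0,1 and r edges (indexed 0..<r) is given by two vector spaces
over a field 'k (carrier types 'a = T0 with scaling sa, 'b = T1 with scaling sb),
and for each edge e < r the arrow maps  A e : T0 -> T1  (arrow 0->1) and
B e : T1 -> T0  (arrow 1->0, the reverse of A e).  The orientation is
om :: nat => bool, where om e means the arrow 0->1 of edge e lies in Omega.
\<close>

definition eps0 :: "(nat \<Rightarrow> bool) \<Rightarrow> nat \<Rightarrow> 'k::field" where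
  "eps0 om e = (if om e then 1 else -1)"

definition eps1 :: "(nat \<Rightarrow> bool) \<Rightarrow> nat \<Rightarrow> 'k::field" where
  "eps1 om e = (if om e then -1 else 1)"

text \<open>Composite of a sequence of 2-cycles 0->1->0 (resp. 1->0->1);
 a pair (e,f) means: first arrow of edge e, then the reverse arrow of edge f.\<close>
fun loop0 :: "(nat \<Rightarrow> 'a \<Rightarrow> 'b) \<Rightarrow> (nat \<Rightarrow> 'b \<Rightarrow> 'a) \<Rightarrow> (nat \<times> nat) list \<Rightarrow> 'a \<Rightarrow> 'a" where
  "loop0 A B [] = id"
| "loop0 A B ((e,f) # ps) = loop0 A B ps \<circ> B f \<circ> A e"

fun loop1 :: "(nat \<Rightarrow> 'a \<Rightarrow> 'b) \<Rightarrow> (nat \<Rightarrow> 'b \<Rightarrow> 'a) \<Rightarrow> (nat \<times> nat) list \<Rightarrow> 'b \<Rightarrow> 'b" where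
  "loop1 A B [] = id"
| "loop1 A B ((e,f) # ps) = loop1 A B ps \<circ> A f \<circ> B e"

definition edges_in :: "nat \<Rightarrow> (nat \<times> nat) list \<Rightarrow> bool" where
  "edges_in r ps = (\<forall>(e,f)\<in>set ps. e < r \<and> f < r)"

definition preproj_module ::
  "('k::field \<Rightarrow> 'a::ab_group_add \<Rightarrow> 'a) \<Rightarrow> ('k \<Rightarrow> 'b::ab_group_add \<Rightarrow> 'b) \<Rightarrow> nat \<Rightarrow> (nat \<Rightarrow> bool)
    \<Rightarrow> (nat \<Rightarrow> 'a \<Rightarrow> 'b) \<Rightarrow> (nat \<Rightarrow> 'b \<Rightarrow> 'a) \<Rightarrow> bool" where
  "preproj_module sa sb r om A B \<longleftrightarrow>
     vector_space sa \<and> vector_space sb \<and>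
     (\<forall>e<r. Vector_Spaces.linear sa sb (A e) \<and> Vector_Spaces.linear sb sa (B e)) \<and>
     (\<forall>v. (\<Sum>e<r. sa (eps0 om e) (B e (A e v))) = 0) \<and>
     (\<forall>w. (\<Sum>e<r. sb (eps1 om e) (A e (B e w))) = 0)"

definition fin_dim :: "('k::field \<Rightarrow> 'a::ab_group_add \<Rightarrow> 'a) \<Rightarrow> bool" where
  "fin_dim s \<longleftrightarrow> (\<exists>S. finite S \<and> module.span s S = UNIV)"

text \<open>Nilpotent: every path of length at least 2N (even: a product of N or more
 2-cycles; odd: such a product followed by one more arrow) acts by zero.\<close>
definition nilpotent_mod :: "nat \<Rightarrow> (nat \<Rightarrow> 'a::zero \<Rightarrow> 'b::zero) \<Rightarrow> (nat \<Rightarrow> 'b \<Rightarrow> 'a) \<Rightarrow> bool" where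
  "nilpotent_mod r A B \<longleftrightarrow> (\<exists>N. \<forall>ps. edges_in r ps \<and> length ps \<ge> N \<longrightarrow>
      (\<forall>v. loop0 A B ps v = 0) \<and> (\<forall>w. loop1 A B ps w = 0) \<and>
      (\<forall>e<r. (\<forall>v. A e (loop0 A B ps v) = 0) \<and> (\<forall>w. B e (loop1 A B ps w) = 0)))"

text \<open>(Graded) submodule = pair of subspaces stable under all arrows.
 Over Lambda (containing the vertex idempotents) every submodule is graded.\<close>
definition is_submod ::
  "('k::field \<Rightarrow> 'a::ab_group_add \<Rightarrow> 'a) \<Rightarrow> ('k \<Rightarrow> 'b::ab_group_add \<Rightarrow> 'b) \<Rightarrow> nat
    \<Rightarrow> (nat \<Rightarrow> 'a \<Rightarrow> 'b) \<Rightarrow> (nat \<Rightarrow> 'b \<Rightarrow> 'a) \<Rightarrow> 'a set \<times> 'b set \<Rightarrow> bool" where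
  "is_submod sa sb r A B W \<longleftrightarrow>
     module.subspace sa (fst W) \<and> module.subspace sb (snd W) \<and>
     (\<forall>e<r. A e ` fst W \<subseteq> snd W \<and> B e ` snd W \<subseteq> fst W)"

definition submod_le :: "'a set \<times> 'b set \<Rightarrow> 'a set \<times> 'b set \<Rightarrow> bool" where
  "submod_le V W \<longleftrightarrow> fst V \<subseteq> fst W \<and> snd V \<subseteq> snd W"

definition set_plus :: "'a::plus set \<Rightarrow> 'a set \<Rightarrow> 'a set" where
  "set_plus P Q = {p + q | p q. p \<in> P \<and> q \<in> Q}"

definition vtx :: "nat \<Rightarrow> nat" where
  "vtx k = (if odd k then 1 else 0)"

fun socfilt :: "nat \<Rightarrow> (nat \<Rightarrow> 'a::ab_group_add \<Rightarrow> 'b::ab_group_add) \<Rightarrow> (nat \<Rightarrow> 'b \<Rightarrow> 'a)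
    \<Rightarrow> nat \<Rightarrow> 'a set \<times> 'b set" where
  "socfilt r A B 0 = ({0}, {0})"
| "socfilt r A B (Suc k) =
     (let P = fst (socfilt r A B k); Q = snd (socfilt r A B k) in
      if vtx (Suc k) = 1
      then (P, set_plus Q {w. \<forall>e<r. B e w \<in> P})
      else (set_plus P {v. \<forall>e<r. A e v \<in> Q}, Q))"

definition dim_at ::
  "('k::field \<Rightarrow> 'a::ab_group_add \<Rightarrow> 'a) \<Rightarrow> ('k \<Rightarrow> 'b::ab_group_add \<Rightarrow> 'b) \<Rightarrow> nat \<Rightarrow> 'a set \<times> 'b set \<Rightarrow> nat" where
  "dim_at sa sb i W = (if i = 0 then vector_space.dim sa (fst W) else vector_space.dim sb (snd W))"

text \<open>The subquotient U_k/U_j has a submodule of dimension vector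
 d0 alpha_0 + d1 alpha_1 iff there is a submodule W with U_j <= W <= U_k and
 dim W_i = dim (U_j)_i + d_i (correspondence theorem).\<close>
definition subquot_has_submod ::
  "('k::field \<Rightarrow> 'a::ab_group_add \<Rightarrow> 'a) \<Rightarrow> ('k \<Rightarrow> 'b::ab_group_add \<Rightarrow> 'b) \<Rightarrow> nat
    \<Rightarrow> (nat \<Rightarrow> 'a \<Rightarrow> 'b) \<Rightarrow> (nat \<Rightarrow> 'b \<Rightarrow> 'a) \<Rightarrow> 'a set \<times> 'b set \<Rightarrow> 'a set \<times> 'b set
    \<Rightarrow> (nat \<Rightarrow> nat) \<Rightarrow> bool" where
  "subquot_has_submod sa sb r A B L H d \<longleftrightarrow>
     (\<exists>W. is_submod sa sb r A B W \<and> submod_le L W \<and> submod_le W H \<and>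
          dim_at sa sb 0 W = dim_at sa sb 0 L + d 0 \<and>
          dim_at sa sb 1 W = dim_at sa sb 1 L + d 1)"

text \<open>Dimension vector a alpha_j + b alpha_{j+1}, as a function of the vertex.\<close>
definition dimvec :: "nat \<Rightarrow> nat \<Rightarrow> nat \<Rightarrow> nat \<Rightarrow> nat" where
  "dimvec j a b i = (if i = vtx j then a else b)"

end

theory Submission imports Defs begin

lemma rank_nullity_sub:
  fixes s1 :: "'k::field \<Rightarrow> 'x::ab_group_add \<Rightarrow> 'x" and s2 :: "'k \<Rightarrow> 'y::ab_group_add \<Rightarrow> 'y"
  assumes fd1: "finite_dimensional_vector_space s1 B1" and fd2: "finite_dimensional_vector_space s2 B2"
   and lin: "Vector_Spaces.linear s1 s2 f" and S: "module.subspace s1 S"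
  shows "vector_space.dim s1 S = vector_space.dim s2 (f ` S) + vector_space.dim s1 {x\<in>S. f x = 0}"
proof -
  interpret v1: finite_dimensional_vector_space s1 B1 by fact
  interpret v2: finite_dimensional_vector_space s2 B2 by fact
  interpret p: finite_dimensional_vector_space_pair s1 B1 s2 B2 by unfold_locales
  interpret lf: Vector_Spaces.linear s1 s2 f by fact
  let ?N = "{x\<in>S. f x = 0}"
  have Nsub: "v1.subspace ?N"
    using v1.subspace_inter[OF S lf.subspace_kernel] by (simp add: Collect_conj_eq Int_commute)
  obtain B where B: "B \<subseteq> ?N" "v1.independent B" "?N \<subseteq> v1.span B" "card B = v1.dim ?N"
    using v1.basis_exists by blast
  obtain C where C: "B \<subseteq> C" "C \<subseteq> S" "v1.independent C" "S \<subseteq> v1.span C"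
    using v1.maximal_independent_subset_extend[of B S] B(1,2) by blast
  have finC: "finite C" using C(3) v1.finiteI_independent by blast
  have cardC: "card C = v1.dim S" using v1.basis_card_eq_dim C by blast
  define D where "D = C - B"
  have CBD: "C = B \<union> D" using C(1) D_def by blast
  have finB: "finite B" and finD: "finite D" using finC CBD by auto
  have BD: "B \<inter> D = {}" unfolding D_def by blast
  have cardD: "card C = card B + card D"
    unfolding CBD by (rule card_Un_disjoint[OF finB finD BD])
  have indD: "v1.independent D" using C(3) CBD v1.independent_mono by blast
  have spanC: "v1.span C = S" using v1.span_subspace[OF C(2) C(4) S] .
  have spanB: "v1.span B \<subseteq> ?N" using v1.span_minimal[OF B(1) Nsub] .
  have spanD: "v1.span D \<subseteq> S" using spanC CBD v1.span_mono[of D C] by blast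
  have "v1.dim {x + y |x y. x \<in> v1.span B \<and> y \<in> v1.span D} + v1.dim (v1.span B \<inter> v1.span D)
        = v1.dim (v1.span B) + v1.dim (v1.span D)"
    by (rule v1.dim_sums_Int) auto
  moreover have "{x + y |x y. x \<in> v1.span B \<and> y \<in> v1.span D} = v1.span C"
    using CBD v1.span_Un by auto
  ultimately have "v1.dim (v1.span B \<inter> v1.span D) = 0"
    using cardC cardD B(2) indD spanC v1.dim_span_eq_card_independent by auto
  hence BD0: "v1.span B \<inter> v1.span D \<subseteq> {0}" by simp
  have inj: "inj_on f (v1.span D)"
    unfolding lf.inj_on_iff_eq_0[OF v1.subspace_span]
  proof (intro ballI impI)
    fix x assume "x \<in> v1.span D" "f x = 0"
    then have "x \<in> v1.span B" using spanD B(3) v1.span_superset by blast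
    then show "x = 0" using BD0 \<open>x \<in> v1.span D\<close> by blast
  qed
  have img: "f ` S = f ` v1.span D"
  proof
    show "f ` v1.span D \<subseteq> f ` S" using spanD by blast
    show "f ` S \<subseteq> f ` v1.span D"
    proof
      fix z assume "z \<in> f ` S"
      then obtain x where x: "x \<in> S" "z = f x" by blast
      then have "x \<in> v1.span (B \<union> D)" using spanC CBD by simp
      then obtain y w where yw: "y \<in> v1.span B" "w \<in> v1.span D" "x = y + w"
        unfolding v1.span_Un by blast
      have "f y = 0" using yw(1) spanB by blast
      then have "z = f w" using x yw lf.add by simp
      then show "z \<in> f ` v1.span D" using yw(2) by blast
    qed
  qed
  have "v2.dim (f ` S) = v1.dim (v1.span D)"
    unfolding img by (rule p.dim_image_eq[OF lin]) (simp only: v1.span_span inj)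
  also have "\<dots> = card D" using indD v1.dim_span_eq_card_independent by blast
  finally show ?thesis using cardC cardD B(4) by simp
qed

lemma quot_rank:
  fixes s1 :: "'k::field \<Rightarrow> 'x::ab_group_add \<Rightarrow> 'x" and s2 :: "'k \<Rightarrow> 'y::ab_group_add \<Rightarrow> 'y"
  assumes fd1: "finite_dimensional_vector_space s1 B1" and fd2: "finite_dimensional_vector_space s2 B2"
   and lin: "Vector_Spaces.linear s1 s2 f" and S: "module.subspace s1 S" and R: "module.subspace s2 R"
  shows "vector_space.dim s1 S + vector_space.dim s2 R =
         vector_space.dim s2 {x + y |x y. x \<in> f ` S \<and> y \<in> R} + vector_space.dim s1 {x\<in>S. f x \<in> R}"
proof -
  interpret v1: finite_dimensional_vector_space s1 B1 by fact
  interpret v2: finite_dimensional_vector_space s2 B2 by fact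
  interpret lf: Vector_Spaces.linear s1 s2 f by fact
  let ?K = "{x\<in>S. f x \<in> R}"
  have K: "v1.subspace ?K"
    using v1.subspace_inter[OF S lf.subspace_linear_preimage[OF R]] by (simp add: Collect_conj_eq Int_commute)
  have r1: "v1.dim S = v2.dim (f ` S) + v1.dim {x\<in>S. f x = 0}"
    by (rule rank_nullity_sub[OF fd1 fd2 lin S])
  have r2: "v1.dim ?K = v2.dim (f ` ?K) + v1.dim {x\<in>?K. f x = 0}"
    by (rule rank_nullity_sub[OF fd1 fd2 lin K])
  have e1: "{x\<in>?K. f x = 0} = {x\<in>S. f x = 0}" using v2.subspace_0[OF R] by auto
  have e2: "f ` ?K = f ` S \<inter> R" by auto
  have fS: "v2.subspace (f ` S)" by (rule lf.subspace_image[OF S])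
  have "v2.dim {x + y |x y. x \<in> f ` S \<and> y \<in> R} + v2.dim (f ` S \<inter> R) = v2.dim (f ` S) + v2.dim R"
    by (rule v2.dim_sums_Int[OF fS R])
  then show ?thesis using r1 r2 e1 e2 by simp
qed

lemma subspace_preimage_all:
  fixes s1 :: "'k::field \<Rightarrow> 'x::ab_group_add \<Rightarrow> 'x" and s2 :: "'k \<Rightarrow> 'y::ab_group_add \<Rightarrow> 'y"
  assumes vs1: "vector_space s1" and vs2: "vector_space s2"
    and lin: "\<forall>e\<in>E. Vector_Spaces.linear s1 s2 (h e)"
    and S: "module.subspace s1 S" and R: "module.subspace s2 R"
  shows "module.subspace s1 {x\<in>S. \<forall>e\<in>E. h e x \<in> R}"
proof -
  interpret v1: vector_space s1 by fact
  interpret v2: vector_space s2 by fact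
  interpret vp: vector_space_pair s1 s2 by unfold_locales
  have h0: "\<forall>e\<in>E. h e 0 = 0" using lin vp.linear_0 by blast
  have hadd: "\<forall>e\<in>E. \<forall>x y. h e (x + y) = h e x + h e y" using lin vp.linear_add by blast
  have hsc: "\<forall>e\<in>E. \<forall>c x. h e (s1 c x) = s2 c (h e x)" using lin vp.linear_scale by blast
  show ?thesis
    unfolding v1.subspace_def
  proof (intro conjI ballI allI)
    show "0 \<in> {x \<in> S. \<forall>e\<in>E. h e x \<in> R}"
      using v1.subspace_0[OF S] v2.subspace_0[OF R] h0 by auto
  next
    fix x y assume x: "x \<in> {x \<in> S. \<forall>e\<in>E. h e x \<in> R}" and y: "y \<in> {x \<in> S. \<forall>e\<in>E. h e x \<in> R}"
    show "x + y \<in> {x \<in> S. \<forall>e\<in>E. h e x \<in> R}"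
      using x y v1.subspace_add[OF S] v2.subspace_add[OF R] hadd by auto
  next
    fix c x assume x: "x \<in> {x \<in> S. \<forall>e\<in>E. h e x \<in> R}"
    show "s1 c x \<in> {x \<in> S. \<forall>e\<in>E. h e x \<in> R}"
      using x v1.subspace_scale[OF S] v2.subspace_scale[OF R] hsc by auto
  qed
qed

lemma part2:
  fixes sx :: "'k::field \<Rightarrow> 'x::ab_group_add \<Rightarrow> 'x" and sy :: "'k \<Rightarrow> 'y::ab_group_add \<Rightarrow> 'y"
    and g :: "nat \<Rightarrow> 'y \<Rightarrow> 'x"
  assumes fd1: "finite_dimensional_vector_space sx Bx" and fd2: "finite_dimensional_vector_space sy By"
   and lin: "\<forall>e<r. Vector_Spaces.linear sy sx (g e)"
   and Y: "module.subspace sy Y" and Z0: "module.subspace sx Z0" and Z: "module.subspace sx Z"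
   and Z0Z: "Z0 \<subseteq> Z" and gYZ: "\<forall>e<r. g e ` Y \<subseteq> Z"
   and hyp: "\<forall>w. (\<forall>e<r. g e w \<in> Z0) \<longrightarrow> w \<in> Y0"
  shows "vector_space.dim sy Y + r * vector_space.dim sx Z0 \<le> vector_space.dim sy Y0 + r * vector_space.dim sx Z"
proof -
  interpret vx: finite_dimensional_vector_space sx Bx by fact
  interpret vy: finite_dimensional_vector_space sy By by fact
  define M where "M m = {w\<in>Y. \<forall>e\<in>{..<m}. g e w \<in> Z0}" for m
  have Msub: "vy.subspace (M m)" if "m \<le> r" for m
    unfolding M_def
    by (rule subspace_preimage_all) (use that lin Y Z0 in \<open>auto intro: vx.vector_space_axioms vy.vector_space_axioms\<close>)
  have step: "vy.dim (M m) + vx.dim Z0 \<le> vx.dim Z + vy.dim (M (Suc m))" if m: "m < r" for m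
  proof -
    have q: "vy.dim (M m) + vx.dim Z0 = vx.dim {x + y |x y. x \<in> g m ` M m \<and> y \<in> Z0} + vy.dim {x\<in>M m. g m x \<in> Z0}"
      by (rule quot_rank[OF fd2 fd1]) (use m lin Msub Z0 in auto)
    have e: "{x\<in>M m. g m x \<in> Z0} = M (Suc m)" unfolding M_def by (auto simp: lessThan_Suc)
    have "{x + y |x y. x \<in> g m ` M m \<and> y \<in> Z0} \<subseteq> Z"
    proof clarify
      fix w y assume "w \<in> M m" "y \<in> Z0"
      then have "g m w \<in> Z" "y \<in> Z" using gYZ m Z0Z unfolding M_def by auto
      then show "g m w + y \<in> Z" using vx.subspace_add[OF Z] by blast
    qed
    then have "vx.dim {x + y |x y. x \<in> g m ` M m \<and> y \<in> Z0} \<le> vx.dim Z" by (rule vx.dim_subset)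
    with q show ?thesis unfolding e by linarith
  qed
  have ind: "vy.dim Y + m * vx.dim Z0 \<le> vy.dim (M m) + m * vx.dim Z" if "m \<le> r" for m
    using that
  proof (induction m)
    case 0
    then show ?case by (simp add: M_def)
  next
    case (Suc m)
    then have "vy.dim Y + m * vx.dim Z0 \<le> vy.dim (M m) + m * vx.dim Z" by simp
    moreover have "vy.dim (M m) + vx.dim Z0 \<le> vx.dim Z + vy.dim (M (Suc m))" using step Suc.prems by simp
    ultimately show ?case by simp
  qed
  have "M r \<subseteq> Y0" using hyp unfolding M_def by auto
  then have "vy.dim (M r) \<le> vy.dim Y0" by (rule vy.dim_subset)
  then show ?thesis using ind[of r] by simp
qed

lemma part1:
  fixes sx :: "'k::field \<Rightarrow> 'x::ab_group_add \<Rightarrow> 'x" and sy :: "'k \<Rightarrow> 'y::ab_group_add \<Rightarrow> 'y"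
    and f :: "nat \<Rightarrow> 'x \<Rightarrow> 'y" and g :: "nat \<Rightarrow> 'y \<Rightarrow> 'x" and eps :: "nat \<Rightarrow> 'k"
  assumes fd1: "finite_dimensional_vector_space sx Bx" and fd2: "finite_dimensional_vector_space sy By"
   and linf: "\<forall>e<r. Vector_Spaces.linear sx sy (f e)"
   and ling: "\<forall>e<r. Vector_Spaces.linear sy sx (g e)"
   and rel: "\<forall>v. (\<Sum>e<r. sx (eps e) (g e (f e v))) = 0"
   and epsnz: "\<forall>e<r. eps e \<noteq> 0"
   and X: "module.subspace sx X" and Y: "module.subspace sy Y" and Y0: "module.subspace sy Y0"
   and Z0: "module.subspace sx Z0"
   and hX0: "\<forall>v\<in>X. (\<forall>e<r. f e v \<in> Y0) \<longrightarrow> v \<in> X0"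
   and fXY: "\<forall>e<r. f e ` X \<subseteq> Y" and gY0: "\<forall>e<r. g e ` Y0 \<subseteq> Z0" and Y0Y: "Y0 \<subseteq> Y"
  shows "vector_space.dim sx X + vector_space.dim sx (module.span sx (Z0 \<union> (\<Union>e<r. g e ` Y)))
           + r * vector_space.dim sy Y0
         \<le> vector_space.dim sx X0 + vector_space.dim sx Z0 + r * vector_space.dim sy Y"
proof -
  interpret vx: finite_dimensional_vector_space sx Bx by fact
  interpret vy: finite_dimensional_vector_space sy By by fact
  interpret vp: vector_space_pair sx sy by unfold_locales
  interpret vq: vector_space_pair sy sx by unfold_locales
  define L where "L m = {v\<in>X. \<forall>e\<in>{m..<r}. f e v \<in> Y0}" for m
  define Zm where "Zm m = vx.span (Z0 \<union> (\<Union>e<m. g e ` Y))" for m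
  define Yp where "Yp m = {y\<in>Y. \<forall>e\<in>{m}. g e y \<in> Zm m}" for m
  have Lsub: "vx.subspace (L m)" for m
    unfolding L_def
    by (rule subspace_preimage_all) (use linf X Y0 in \<open>auto intro: vx.vector_space_axioms vy.vector_space_axioms\<close>)
  have Zsub: "vx.subspace (Zm m)" for m unfolding Zm_def by simp
  have Ypsub: "vy.subspace (Yp m)" if "m < r" for m
    unfolding Yp_def
    by (rule subspace_preimage_all) (use that ling Y Zsub in \<open>auto intro: vx.vector_space_axioms vy.vector_space_axioms\<close>)
  have Z0Zm: "Z0 \<subseteq> Zm m" for m unfolding Zm_def by (rule subset_trans[OF Un_upper1 vx.span_superset])
  have gYZm: "g e ` Y \<subseteq> Zm m" if "e < m" for e m unfolding Zm_def
    by (rule subset_trans[OF _ vx.span_superset]) (use that in blast)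
  have Zm0: "Zm 0 = Z0" unfolding Zm_def using Z0 by simp
  have ZmSuc: "Zm (Suc m) = {x + y |x y. x \<in> g m ` Y \<and> y \<in> Zm m}" if m: "m < r" for m
  proof -
    have "Z0 \<union> (\<Union>e<Suc m. g e ` Y) = g m ` Y \<union> (Z0 \<union> (\<Union>e<m. g e ` Y))"
      by (auto simp: lessThan_Suc)
    then have "Zm (Suc m) = vx.span (g m ` Y \<union> (Z0 \<union> (\<Union>e<m. g e ` Y)))" unfolding Zm_def by simp
    also have "\<dots> = {x + y |x y. x \<in> vx.span (g m ` Y) \<and> y \<in> Zm m}"
      unfolding vx.span_Un Zm_def by simp
    also have "vx.span (g m ` Y) = g m ` Y"
      using vq.linear_subspace_image[of "g m" Y] ling m Y
      by (simp add: vx.span_eq_iff)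
    finally show ?thesis .
  qed
  have key: "g m (f m v) \<in> Zm m" if m: "m < r" and v: "v \<in> L (Suc m)" for m v
  proof -
    have vX: "v \<in> X" using v unfolding L_def by simp
    have rest: "(\<Sum>e\<in>{..<r} - {m}. sx (eps e) (g e (f e v))) \<in> Zm m"
    proof (rule vx.subspace_sum[OF Zsub])
      fix e assume e: "e \<in> {..<r} - {m}"
      have "g e (f e v) \<in> Zm m"
      proof (cases "e < m")
        case True
        then have "f e v \<in> Y" using fXY vX e by auto
        then show ?thesis using gYZm[OF True] by blast
      next
        case False
        then have "e \<in> {Suc m..<r}" using e by auto
        then have "f e v \<in> Y0" using v unfolding L_def by auto
        then have "g e (f e v) \<in> Z0" using gY0 e by auto
        then show ?thesis using Z0Zm by blast
      qed
      then show "sx (eps e) (g e (f e v)) \<in> Zm m" using vx.subspace_scale[OF Zsub] by blast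
    qed
    have "(\<Sum>e<r. sx (eps e) (g e (f e v))) = sx (eps m) (g m (f m v)) + (\<Sum>e\<in>{..<r} - {m}. sx (eps e) (g e (f e v)))"
      by (rule sum.remove) (simp_all add: m)
    then have "sx (eps m) (g m (f m v)) + (\<Sum>e\<in>{..<r} - {m}. sx (eps e) (g e (f e v))) = 0"
      using rel by simp
    then have "sx (eps m) (g m (f m v)) = - (\<Sum>e\<in>{..<r} - {m}. sx (eps e) (g e (f e v)))"
      by (simp add: eq_neg_iff_add_eq_0)
    then have "sx (eps m) (g m (f m v)) \<in> Zm m" using vx.subspace_neg[OF Zsub rest] by simp
    then have "sx (inverse (eps m)) (sx (eps m) (g m (f m v))) \<in> Zm m"
      using vx.subspace_scale[OF Zsub] by blast
    then show ?thesis using epsnz m by simp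
  qed
  have step: "vx.dim (L (Suc m)) + vx.dim (Zm (Suc m)) + vy.dim Y0 \<le> vx.dim (L m) + vx.dim (Zm m) + vy.dim Y"
    if m: "m < r" for m
  proof -
    have qa: "vx.dim (L (Suc m)) + vy.dim Y0 = vy.dim {x + y |x y. x \<in> f m ` L (Suc m) \<and> y \<in> Y0}
              + vx.dim {x\<in>L (Suc m). f m x \<in> Y0}"
      by (rule quot_rank[OF fd1 fd2]) (use m linf Lsub Y0 in auto)
    have ea: "{x\<in>L (Suc m). f m x \<in> Y0} = L m"
    proof -
      have "{m..<r} = insert m {Suc m..<r}" using m by auto
      then show ?thesis unfolding L_def by auto
    qed
    have sa: "{x + y |x y. x \<in> f m ` L (Suc m) \<and> y \<in> Y0} \<subseteq> Yp m"
    proof clarify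
      fix v y assume v: "v \<in> L (Suc m)" and y: "y \<in> Y0"
      have vX: "v \<in> X" using v unfolding L_def by simp
      have fvY: "f m v \<in> Y" using fXY vX m by auto
      have yY: "y \<in> Y" using y Y0Y by auto
      have "g m (f m v + y) = g m (f m v) + g m y" using ling m vq.linear_add by blast
      moreover have "g m y \<in> Zm m" using gY0 m y Z0Zm by blast
      ultimately have "g m (f m v + y) \<in> Zm m" using key[OF m v] vx.subspace_add[OF Zsub] by simp
      then show "f m v + y \<in> Yp m" unfolding Yp_def using vy.subspace_add[OF Y fvY yY] by simp
    qed
    have da: "vy.dim {x + y |x y. x \<in> f m ` L (Suc m) \<and> y \<in> Y0} \<le> vy.dim (Yp m)"
      using sa by (rule vy.dim_subset)
    have qb: "vy.dim Y + vx.dim (Zm m) = vx.dim {x + y |x y. x \<in> g m ` Y \<and> y \<in> Zm m}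
              + vy.dim {x\<in>Y. g m x \<in> Zm m}"
      by (rule quot_rank[OF fd2 fd1]) (use m ling Y Zsub in auto)
    have eb: "{x\<in>Y. g m x \<in> Zm m} = Yp m" unfolding Yp_def by simp
    from qa qb da show ?thesis unfolding ea eb ZmSuc[OF m, symmetric] by linarith
  qed
  have ind: "vx.dim (L m) + vx.dim (Zm m) + m * vy.dim Y0 \<le> vx.dim (L 0) + vx.dim Z0 + m * vy.dim Y"
    if "m \<le> r" for m
    using that
  proof (induction m)
    case 0
    then show ?case by (simp add: Zm0)
  next
    case (Suc m)
    then have "vx.dim (L m) + vx.dim (Zm m) + m * vy.dim Y0 \<le> vx.dim (L 0) + vx.dim Z0 + m * vy.dim Y" by simp
    moreover have "vx.dim (L (Suc m)) + vx.dim (Zm (Suc m)) + vy.dim Y0 \<le> vx.dim (L m) + vx.dim (Zm m) + vy.dim Y"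
      using step Suc.prems by simp
    ultimately show ?case by simp
  qed
  have Lr: "L r = X" unfolding L_def by simp
  have "L 0 \<subseteq> X0" using hX0 unfolding L_def by auto
  then have "vx.dim (L 0) \<le> vx.dim X0" by (rule vx.dim_subset)
  then show ?thesis using ind[of r] unfolding Lr Zm_def by simp
qed

lemma fd_obtain:
  fixes s :: "'k::field \<Rightarrow> 'x::ab_group_add \<Rightarrow> 'x"
  assumes vs: "vector_space s" and fd: "fin_dim s"
  shows "\<exists>B. finite_dimensional_vector_space s B"
proof -
  interpret v: vector_space s by fact
  obtain S where S: "finite S" "v.span S = UNIV" using fd unfolding fin_dim_def by blast
  obtain B where B: "v.independent B" "UNIV \<subseteq> v.span B"
    using v.basis_exists[of UNIV] by blast
  have "finite B" using v.independent_span_bound[OF S(1) B(1)] S(2) by auto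
  then have "finite_dimensional_vector_space s B"
    unfolding finite_dimensional_vector_space_def finite_dimensional_vector_space_axioms_def
    using vs B by auto
  then show ?thesis by blast
qed

lemma soc_Suc_odd:
  "odd (Suc n) \<Longrightarrow> socfilt r A B (Suc n) = (fst (socfilt r A B n),
     set_plus (snd (socfilt r A B n)) {w. \<forall>e<r. B e w \<in> fst (socfilt r A B n)})"
  by (simp add: vtx_def Let_def)

lemma soc_Suc_even:
  "even (Suc n) \<Longrightarrow> socfilt r A B (Suc n) = (set_plus (fst (socfilt r A B n)) {v. \<forall>e<r. A e v \<in> snd (socfilt r A B n)},
     snd (socfilt r A B n))"
  by (simp add: vtx_def Let_def)

lemma set_plus_eq: "set_plus P Q = {x + y |x y. x \<in> P \<and> y \<in> Q}"
  unfolding set_plus_def by blast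

lemma soc_submod:
  assumes P: "preproj_module sa sb r om A B"
  shows "is_submod sa sb r A B (socfilt r A B n)"
proof -
  interpret va: vector_space sa using P unfolding preproj_module_def by blast
  interpret vb: vector_space sb using P unfolding preproj_module_def by blast
  interpret pab: vector_space_pair sa sb by unfold_locales
  interpret pba: vector_space_pair sb sa by unfold_locales
  have linA: "\<forall>e<r. Vector_Spaces.linear sa sb (A e)" and linB: "\<forall>e<r. Vector_Spaces.linear sb sa (B e)"
    using P unfolding preproj_module_def by blast+
  show ?thesis
  proof (induction n)
    case 0
    have "\<forall>e<r. A e 0 = 0 \<and> B e 0 = 0" using linA linB pab.linear_0 pba.linear_0 by blast
    then show ?case unfolding is_submod_def by simp
  next
    case (Suc n)
    let ?P = "fst (socfilt r A B n)" and ?Q = "snd (socfilt r A B n)"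
    have sP: "va.subspace ?P" and sQ: "vb.subspace ?Q" and AP: "\<forall>e<r. A e ` ?P \<subseteq> ?Q"
      and BQ: "\<forall>e<r. B e ` ?Q \<subseteq> ?P"
      using Suc.IH unfolding is_submod_def by blast+
    show ?case
    proof (cases "odd (Suc n)")
      case True
      let ?S = "{w. \<forall>e<r. B e w \<in> ?P}"
      have sS: "vb.subspace ?S"
      proof -
        have eq: "?S = {x\<in>UNIV. \<forall>e\<in>{..<r}. B e x \<in> ?P}" by auto
        show ?thesis unfolding eq
          by (rule subspace_preimage_all[OF vb.vector_space_axioms va.vector_space_axioms]) (use linB sP in auto)
      qed
      have sN: "vb.subspace (set_plus ?Q ?S)" unfolding set_plus_eq by (rule vb.subspace_sums[OF sQ sS])
      have "\<forall>e<r. B e 0 = 0" using linB pba.linear_0 by blast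
      then have "0 \<in> ?S" using va.subspace_0[OF sP] by simp
      then have QN: "?Q \<subseteq> set_plus ?Q ?S" unfolding set_plus_def by force
      have BN: "B e ` set_plus ?Q ?S \<subseteq> ?P" if e: "e < r" for e
      proof clarify
        fix x assume "x \<in> set_plus ?Q ?S"
        then obtain q w where qw: "q \<in> ?Q" "w \<in> ?S" "x = q + w" unfolding set_plus_def by blast
        have "B e x = B e q + B e w" using qw(3) linB e pba.linear_add by blast
        moreover have "B e q \<in> ?P" using BQ e qw(1) by blast
        moreover have "B e w \<in> ?P" using qw(2) e by blast
        ultimately show "B e x \<in> ?P" using va.subspace_add[OF sP] by simp
      qed
      show ?thesis unfolding soc_Suc_odd[OF True] is_submod_def using sP sN AP QN BN by auto
    next
      case False
      then have ev: "even (Suc n)" by simp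
      let ?S = "{v. \<forall>e<r. A e v \<in> ?Q}"
      have sS: "va.subspace ?S"
      proof -
        have eq: "?S = {x\<in>UNIV. \<forall>e\<in>{..<r}. A e x \<in> ?Q}" by auto
        show ?thesis unfolding eq
          by (rule subspace_preimage_all[OF va.vector_space_axioms vb.vector_space_axioms]) (use linA sQ in auto)
      qed
      have sN: "va.subspace (set_plus ?P ?S)" unfolding set_plus_eq by (rule va.subspace_sums[OF sP sS])
      have "\<forall>e<r. A e 0 = 0" using linA pab.linear_0 by blast
      then have "0 \<in> ?S" using vb.subspace_0[OF sQ] by simp
      then have PN: "?P \<subseteq> set_plus ?P ?S" unfolding set_plus_def by force
      have AN: "A e ` set_plus ?P ?S \<subseteq> ?Q" if e: "e < r" for e
      proof clarify
        fix x assume "x \<in> set_plus ?P ?S"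
        then obtain q w where qw: "q \<in> ?P" "w \<in> ?S" "x = q + w" unfolding set_plus_def by blast
        have "A e x = A e q + A e w" using qw(3) linA e pab.linear_add by blast
        moreover have "A e q \<in> ?Q" using AP e qw(1) by blast
        moreover have "A e w \<in> ?Q" using qw(2) e by blast
        ultimately show "A e x \<in> ?Q" using vb.subspace_add[OF sQ] by simp
      qed
      show ?thesis unfolding soc_Suc_even[OF ev] is_submod_def using sQ sN BQ PN AN by auto
    qed
  qed
qed

lemma soc_step:
  assumes P: "preproj_module sa sb r om A B"
  shows "submod_le (socfilt r A B n) (socfilt r A B (Suc n))"
proof -
  have sub: "is_submod sa sb r A B (socfilt r A B n)" by (rule soc_submod[OF P])
  interpret va: vector_space sa using P unfolding preproj_module_def by blast
  interpret vb: vector_space sb using P unfolding preproj_module_def by blast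
  interpret pab: vector_space_pair sa sb by unfold_locales
  interpret pba: vector_space_pair sb sa by unfold_locales
  have linA: "\<forall>e<r. Vector_Spaces.linear sa sb (A e)" and linB: "\<forall>e<r. Vector_Spaces.linear sb sa (B e)"
    using P unfolding preproj_module_def by blast+
  have A0: "\<forall>e<r. A e 0 = 0" using linA pab.linear_0 by blast
  have B0: "\<forall>e<r. B e 0 = 0" using linB pba.linear_0 by blast
  have z: "0 \<in> fst (socfilt r A B n)" "0 \<in> snd (socfilt r A B n)"
    using sub va.subspace_0 vb.subspace_0 unfolding is_submod_def by blast+
  show ?thesis
  proof (cases "odd (Suc n)")
    case True
    show ?thesis unfolding soc_Suc_odd[OF True] submod_le_def set_plus_def
      using z B0 by force
  next
    case False
    then have ev: "even (Suc n)" by simp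
    show ?thesis unfolding soc_Suc_even[OF ev] submod_le_def set_plus_def
      using z A0 by force
  qed
qed

lemma soc_mono:
  assumes P: "preproj_module sa sb r om A B" and mn: "m \<le> n"
  shows "submod_le (socfilt r A B m) (socfilt r A B n)"
  using mn
proof (induction n rule: dec_induct)
  case base
  then show ?case by (simp add: submod_le_def)
next
  case (step n)
  then show ?case using soc_step[OF P, of n] unfolding submod_le_def by blast
qed

lemma soc_odd:
  assumes P: "preproj_module sa sb r om A B" and n: "odd n"
  shows "fst (socfilt r A B n) = fst (socfilt r A B (n - 1))"
    and "\<forall>w. (\<forall>e<r. B e w \<in> fst (socfilt r A B (n - 1))) \<longrightarrow> w \<in> snd (socfilt r A B n)"
proof -
  obtain m where m: "n = Suc m" using n by (cases n) auto
  have o: "odd (Suc m)" using n m by simp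
  have sub: "is_submod sa sb r A B (socfilt r A B m)" by (rule soc_submod[OF P])
  interpret vb: vector_space sb using P unfolding preproj_module_def by blast
  have z: "0 \<in> snd (socfilt r A B m)" using sub vb.subspace_0 unfolding is_submod_def by blast
  show "fst (socfilt r A B n) = fst (socfilt r A B (n - 1))" unfolding m soc_Suc_odd[OF o] by simp
  show "\<forall>w. (\<forall>e<r. B e w \<in> fst (socfilt r A B (n - 1))) \<longrightarrow> w \<in> snd (socfilt r A B n)"
  proof (intro allI impI)
    fix w assume "\<forall>e<r. B e w \<in> fst (socfilt r A B (n - 1))"
    then have "w \<in> {w. \<forall>e<r. B e w \<in> fst (socfilt r A B m)}" using m by simp
    then have "0 + w \<in> set_plus (snd (socfilt r A B m)) {w. \<forall>e<r. B e w \<in> fst (socfilt r A B m)}"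
      unfolding set_plus_def using z by blast
    then show "w \<in> snd (socfilt r A B n)" unfolding m soc_Suc_odd[OF o] by simp
  qed
qed

lemma soc_even:
  assumes P: "preproj_module sa sb r om A B" and n: "even n" and n1: "n \<ge> 1"
  shows "snd (socfilt r A B n) = snd (socfilt r A B (n - 1))"
    and "\<forall>v. (\<forall>e<r. A e v \<in> snd (socfilt r A B (n - 1))) \<longrightarrow> v \<in> fst (socfilt r A B n)"
proof -
  obtain m where m: "n = Suc m" using n1 by (cases n) auto
  have o: "even (Suc m)" using n m by simp
  have sub: "is_submod sa sb r A B (socfilt r A B m)" by (rule soc_submod[OF P])
  interpret va: vector_space sa using P unfolding preproj_module_def by blast
  have z: "0 \<in> fst (socfilt r A B m)" using sub va.subspace_0 unfolding is_submod_def by blast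
  show "snd (socfilt r A B n) = snd (socfilt r A B (n - 1))" unfolding m soc_Suc_even[OF o] by simp
  show "\<forall>v. (\<forall>e<r. A e v \<in> snd (socfilt r A B (n - 1))) \<longrightarrow> v \<in> fst (socfilt r A B n)"
  proof (intro allI impI)
    fix w assume "\<forall>e<r. A e w \<in> snd (socfilt r A B (n - 1))"
    then have "w \<in> {v. \<forall>e<r. A e v \<in> snd (socfilt r A B m)}" using m by simp
    then have "0 + w \<in> set_plus (fst (socfilt r A B m)) {v. \<forall>e<r. A e v \<in> snd (socfilt r A B m)}"
      unfolding set_plus_def using z by blast
    then show "w \<in> fst (socfilt r A B n)" unfolding m soc_Suc_even[OF o] by simp
  qed
qed

lemma gen:
  fixes sx :: "'k::field \<Rightarrow> 'x::ab_group_add \<Rightarrow> 'x" and sy :: "'k \<Rightarrow> 'y::ab_group_add \<Rightarrow> 'y"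
    and f :: "nat \<Rightarrow> 'x \<Rightarrow> 'y" and g :: "nat \<Rightarrow> 'y \<Rightarrow> 'x" and eps :: "nat \<Rightarrow> 'k"
  assumes fd1: "finite_dimensional_vector_space sx Bx" and fd2: "finite_dimensional_vector_space sy By"
   and linf: "\<forall>e<r. Vector_Spaces.linear sx sy (f e)"
   and ling: "\<forall>e<r. Vector_Spaces.linear sy sx (g e)"
   and rel: "\<forall>v. (\<Sum>e<r. sx (eps e) (g e (f e v))) = 0"
   and epsnz: "\<forall>e<r. eps e \<noteq> 0" and r: "r \<ge> 1"
   and Wx: "module.subspace sx Wx" and Wy: "module.subspace sy Wy"
   and Pjy: "module.subspace sy Pjy" and Pj1x: "module.subspace sx Pj1x" and Pk1x: "module.subspace sx Pk1x"
   and fW: "\<forall>e<r. f e ` Wx \<subseteq> Wy" and gW: "\<forall>e<r. g e ` Wy \<subseteq> Wx"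
   and gPj: "\<forall>e<r. g e ` Pjy \<subseteq> Pj1x" and fPj1: "\<forall>e<r. f e ` Pj1x \<subseteq> Pjy"
   and gPk: "\<forall>e<r. g e ` Pky \<subseteq> Pk1x"
   and s1: "Pj1x \<subseteq> Pk1x" and s2: "Pjy \<subseteq> Wy" and s3: "Wy \<subseteq> Pky"
   and hX0: "\<forall>v. (\<forall>e<r. f e v \<in> Pjy) \<longrightarrow> v \<in> Pjx"
   and dWx: "vector_space.dim sx Wx = vector_space.dim sx Pjx + a"
   and dWy: "vector_space.dim sy Wy = vector_space.dim sy Pjy + b"
   and h2: "Q \<longrightarrow> (\<forall>w. (\<forall>e<r. g e w \<in> Pj1x) \<longrightarrow> w \<in> Pjy)"
  shows "\<exists>Z c. module.subspace sx Z \<and> Pj1x \<subseteq> Z \<and> Z \<subseteq> Pk1x \<and> (\<forall>e<r. f e ` Z \<subseteq> Wy \<and> g e ` Wy \<subseteq> Z)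
     \<and> vector_space.dim sx Z = vector_space.dim sx Pj1x + c \<and> int c \<le> int r * int b - int a
     \<and> (Q \<longrightarrow> real b / real r \<le> real c)"
proof -
  interpret vx: finite_dimensional_vector_space sx Bx by fact
  interpret vy: finite_dimensional_vector_space sy By by fact
  interpret vp: vector_space_pair sx sy by unfold_locales
  define Z where "Z = vx.span (Pj1x \<union> (\<Union>e<r. g e ` Wy))"
  have Zs: "vx.subspace Z" unfolding Z_def by simp
  have PZ: "Pj1x \<subseteq> Z" unfolding Z_def by (rule subset_trans[OF Un_upper1 vx.span_superset])
  have gZ: "g e ` Wy \<subseteq> Z" if "e < r" for e unfolding Z_def
    by (rule subset_trans[OF _ vx.span_superset]) (use that in blast)
  have ZP: "Z \<subseteq> Pk1x" unfolding Z_def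
  proof (rule vx.span_minimal[OF _ Pk1x])
    show "Pj1x \<union> (\<Union>e<r. g e ` Wy) \<subseteq> Pk1x" using s1 s3 gPk by blast
  qed
  have fZ: "f e ` Z \<subseteq> Wy" if e: "e < r" for e
  proof -
    have lin: "Vector_Spaces.linear sx sy (f e)" using linf e by blast
    have "f e ` (Pj1x \<union> (\<Union>e<r. g e ` Wy)) \<subseteq> Wy"
    proof -
      have "f e ` Pj1x \<subseteq> Wy" using fPj1 e s2 by blast
      moreover have "f e ` (\<Union>e<r. g e ` Wy) \<subseteq> Wy" using gW fW e by blast
      ultimately show ?thesis by blast
    qed
    then have "vy.span (f e ` (Pj1x \<union> (\<Union>e<r. g e ` Wy))) \<subseteq> Wy" by (rule vy.span_minimal[OF _ Wy])
    then show ?thesis unfolding Z_def vp.linear_span_image[OF lin] .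
  qed
  have p1: "vx.dim Wx + vx.dim Z + r * vy.dim Pjy \<le> vx.dim Pjx + vx.dim Pj1x + r * vy.dim Wy"
    unfolding Z_def
    by (rule part1[OF fd1 fd2 linf ling rel epsnz Wx Wy Pjy Pj1x]) (use hX0 fW gPj s2 in auto)
  have dle: "vx.dim Pj1x \<le> vx.dim Z" using PZ by (rule vx.dim_subset)
  define c where "c = vx.dim Z - vx.dim Pj1x"
  have dZ: "vx.dim Z = vx.dim Pj1x + c" using dle c_def by simp
  have ineq: "a + c \<le> r * b" using p1 dWx dWy dZ by (simp add: algebra_simps)
  have "int c \<le> int r * int b - int a"
  proof -
    have "int (a + c) \<le> int (r * b)" using ineq by linarith
    then show ?thesis by simp
  qed
  moreover have "Q \<longrightarrow> real b / real r \<le> real c"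
  proof
    assume Q
    have "vy.dim Wy + r * vx.dim Pj1x \<le> vy.dim Pjy + r * vx.dim Z"
      by (rule part2[OF fd1 fd2 ling Wy Pj1x Zs PZ]) (use gZ h2 \<open>Q\<close> in auto)
    then have "b \<le> r * c" using dWy dZ by (simp add: algebra_simps)
    then have "real b \<le> real r * real c" by (metis of_nat_le_iff of_nat_mult)
    then show "real b / real r \<le> real c" using r by (simp add: divide_le_eq mult.commute)
  qed
  ultimately show ?thesis using Zs PZ ZP fZ gZ dZ by blast
qed

theorem mainTheorem2:
  fixes sa :: "'k::field \<Rightarrow> 'a::ab_group_add \<Rightarrow> 'a"
    and sb :: "'k \<Rightarrow> 'b::ab_group_add \<Rightarrow> 'b"
    and r :: nat and om :: "nat \<Rightarrow> bool"
    and A :: "nat \<Rightarrow> 'a \<Rightarrow> 'b" and B :: "nat \<Rightarrow> 'b \<Rightarrow> 'a"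
    and j k a b :: nat
  assumes "r \<ge> 3"
    and "preproj_module sa sb r om A B"
    and "fin_dim sa" and "fin_dim sb"
    and "nilpotent_mod r A B"
    and "1 \<le> j" and "j < k" and "even (k - j)"
    and "subquot_has_submod sa sb r A B (socfilt r A B j) (socfilt r A B k) (dimvec j a b)"
  shows "\<exists>c::nat.
           subquot_has_submod sa sb r A B (socfilt r A B (j - 1)) (socfilt r A B (k - 1))
             (dimvec j c b) \<and>
           int c \<le> int r * int b - int a \<and>
           (j \<ge> 2 \<longrightarrow> real b / real r \<le> real c)"
proof -
  have P: "preproj_module sa sb r om A B" by fact
  have vsa: "vector_space sa" and vsb: "vector_space sb"
    and linA: "\<forall>e<r. Vector_Spaces.linear sa sb (A e)" and linB: "\<forall>e<r. Vector_Spaces.linear sb sa (B e)"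
    and relA: "\<forall>v. (\<Sum>e<r. sa (eps0 om e) (B e (A e v))) = 0"
    and relB: "\<forall>w. (\<Sum>e<r. sb (eps1 om e) (A e (B e w))) = 0"
    using P unfolding preproj_module_def by blast+
  obtain Ba where fda: "finite_dimensional_vector_space sa Ba" using fd_obtain[OF vsa assms(3)] by blast
  obtain Bb where fdb: "finite_dimensional_vector_space sb Bb" using fd_obtain[OF vsb assms(4)] by blast
  have eps0nz: "\<forall>e<r. (eps0 om e :: 'k) \<noteq> 0" by (simp add: eps0_def)
  have eps1nz: "\<forall>e<r. (eps1 om e :: 'k) \<noteq> 0" by (simp add: eps1_def)
  have r1: "r \<ge> 1" using assms(1) by simp
  obtain W where W: "is_submod sa sb r A B W" "submod_le (socfilt r A B j) W" "submod_le W (socfilt r A B k)"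
    "dim_at sa sb 0 W = dim_at sa sb 0 (socfilt r A B j) + dimvec j a b 0"
    "dim_at sa sb 1 W = dim_at sa sb 1 (socfilt r A B j) + dimvec j a b 1"
    using assms(9) unfolding subquot_has_submod_def by blast
  have Ws: "module.subspace sa (fst W)" "module.subspace sb (snd W)"
    "\<forall>e<r. A e ` fst W \<subseteq> snd W \<and> B e ` snd W \<subseteq> fst W"
    using W(1) unfolding is_submod_def by blast+
  have sub: "module.subspace sa (fst (socfilt r A B n)) \<and> module.subspace sb (snd (socfilt r A B n))
     \<and> (\<forall>e<r. A e ` fst (socfilt r A B n) \<subseteq> snd (socfilt r A B n) \<and> B e ` snd (socfilt r A B n) \<subseteq> fst (socfilt r A B n))" for n
    using soc_submod[OF P, of n] unfolding is_submod_def by blast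
  have mono: "submod_le (socfilt r A B (j - 1)) (socfilt r A B (k - 1))"
    by (rule soc_mono[OF P]) (use assms(7) in simp)
  have par: "odd k \<longleftrightarrow> odd j"
  proof -
    have "k = j + (k - j)" using assms(7) by simp
    then show ?thesis using assms(8) by (metis even_add)
  qed
  show ?thesis
  proof (cases "odd j")
    case True
    have ok: "odd k" using par True by simp
    have vj: "vtx j = 1" using True by (simp add: vtx_def)
    note oj = soc_odd[OF P True]
    note okk = soc_odd[OF P ok]
    have h2: "j \<ge> 2 \<longrightarrow> (\<forall>w. (\<forall>e<r. A e w \<in> snd (socfilt r A B (j - 1))) \<longrightarrow> w \<in> fst (socfilt r A B j))"
    proof (intro impI allI)
      fix w assume j2: "j \<ge> 2" and hw: "\<forall>e<r. A e w \<in> snd (socfilt r A B (j - 1))"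
      have ev: "even (j - 1)" using True j2 by simp
      note ej = soc_even[OF P ev, of ] 
      have j11: "j - 1 \<ge> 1" using j2 by simp
      have "w \<in> fst (socfilt r A B (j - 1))"
        using soc_even(2)[OF P ev j11] soc_even(1)[OF P ev j11] hw by simp
      then show "w \<in> fst (socfilt r A B j)" using oj(1) by simp
    qed
    have dW1: "vector_space.dim sb (snd W) = vector_space.dim sb (snd (socfilt r A B j)) + a"
      using W(5) vj by (simp add: dim_at_def dimvec_def)
    have dW0: "vector_space.dim sa (fst W) = vector_space.dim sa (fst (socfilt r A B j)) + b"
      using W(4) vj by (simp add: dim_at_def dimvec_def)
    obtain Z c where Z: "module.subspace sb Z" "snd (socfilt r A B (j - 1)) \<subseteq> Z" "Z \<subseteq> snd (socfilt r A B (k - 1))"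
      "\<forall>e<r. B e ` Z \<subseteq> fst W \<and> A e ` fst W \<subseteq> Z"
      "vector_space.dim sb Z = vector_space.dim sb (snd (socfilt r A B (j - 1))) + c"
      "int c \<le> int r * int b - int a" "j \<ge> 2 \<longrightarrow> real b / real r \<le> real c"
    proof (rule exE[OF gen[OF fdb fda linB linA relB eps1nz r1 Ws(2) Ws(1),
            of "fst (socfilt r A B j)" "snd (socfilt r A B (j - 1))" "snd (socfilt r A B (k - 1))"
               "fst (socfilt r A B (k - 1))" "snd (socfilt r A B j)" a b "j \<ge> 2"]], goal_cases)
      case 1 show ?case using sub by blast
    next
      case 2 show ?case using sub by blast
    next
      case 3 show ?case using sub by blast
    next
      case 4 show ?case using Ws(3) by blast
    next
      case 5 show ?case using Ws(3) by blast
    next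
      case 6 show ?case using sub[of "j - 1"] oj(1) by simp
    next
      case 7 show ?case using sub[of "j - 1"] oj(1) by simp
    next
      case 8 show ?case using sub[of "k - 1"] by blast
    next
      case 9 show ?case using mono unfolding submod_le_def by blast
    next
      case 10 show ?case using W(2) unfolding submod_le_def by blast
    next
      case 11 show ?case using W(3) okk(1) unfolding submod_le_def by simp
    next
      case 12 show ?case using oj by simp
    next
      case 13 show ?case by (rule dW1)
    next
      case 14 show ?case by (rule dW0)
    next
      case 15 show ?case using h2 by blast
    next
      case (16 Z)
      then show ?case by (elim exE conjE) (rule that; assumption)
    qed
    have "subquot_has_submod sa sb r A B (socfilt r A B (j - 1)) (socfilt r A B (k - 1)) (dimvec j c b)"
      unfolding subquot_has_submod_def
    proof (intro exI[of _ "(fst W, Z)"] conjI)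
      show "is_submod sa sb r A B (fst W, Z)" unfolding is_submod_def using Ws Z by auto
      show "submod_le (socfilt r A B (j - 1)) (fst W, Z)"
        unfolding submod_le_def using W(2) oj(1) Z(2) unfolding submod_le_def by simp
      show "submod_le (fst W, Z) (socfilt r A B (k - 1))"
        unfolding submod_le_def using W(3) okk(1) Z(3) unfolding submod_le_def by simp
      show "dim_at sa sb 0 (fst W, Z) = dim_at sa sb 0 (socfilt r A B (j - 1)) + dimvec j c b 0"
        using dW0 oj(1) vj by (simp add: dim_at_def dimvec_def)
      show "dim_at sa sb 1 (fst W, Z) = dim_at sa sb 1 (socfilt r A B (j - 1)) + dimvec j c b 1"
        using Z(5) vj by (simp add: dim_at_def dimvec_def)
    qed
    then show ?thesis using Z(6,7) by blast
  next
    case False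
    have ej: "even j" using False by simp
    have ek: "even k" using par False by simp
    have j2: "j \<ge> 2" using ej assms(6) by presburger
    have k1: "k \<ge> 1" using assms(6,7) by simp
    have vj: "vtx j = 0" using ej by (simp add: vtx_def)
    note ejj = soc_even[OF P ej assms(6)]
    note ekk = soc_even[OF P ek k1]
    have oj1: "odd (j - 1)" using ej j2 by simp
    note oj = soc_odd[OF P oj1]
    have h2: "j \<ge> 2 \<longrightarrow> (\<forall>w. (\<forall>e<r. B e w \<in> fst (socfilt r A B (j - 1))) \<longrightarrow> w \<in> snd (socfilt r A B j))"
    proof (intro impI allI)
      fix w assume hw: "\<forall>e<r. B e w \<in> fst (socfilt r A B (j - 1))"
      have "w \<in> snd (socfilt r A B (j - 1))" using oj hw by simp
      then show "w \<in> snd (socfilt r A B j)" using ejj(1) by simp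
    qed
    have dW0: "vector_space.dim sa (fst W) = vector_space.dim sa (fst (socfilt r A B j)) + a"
      using W(4) vj by (simp add: dim_at_def dimvec_def)
    have dW1: "vector_space.dim sb (snd W) = vector_space.dim sb (snd (socfilt r A B j)) + b"
      using W(5) vj by (simp add: dim_at_def dimvec_def)
    obtain Z c where Z: "module.subspace sa Z" "fst (socfilt r A B (j - 1)) \<subseteq> Z" "Z \<subseteq> fst (socfilt r A B (k - 1))"
      "\<forall>e<r. A e ` Z \<subseteq> snd W \<and> B e ` snd W \<subseteq> Z"
      "vector_space.dim sa Z = vector_space.dim sa (fst (socfilt r A B (j - 1))) + c"
      "int c \<le> int r * int b - int a" "j \<ge> 2 \<longrightarrow> real b / real r \<le> real c"
    proof (rule exE[OF gen[OF fda fdb linA linB relA eps0nz r1 Ws(1) Ws(2),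
            of "snd (socfilt r A B j)" "fst (socfilt r A B (j - 1))" "fst (socfilt r A B (k - 1))"
               "snd (socfilt r A B (k - 1))" "fst (socfilt r A B j)" a b "j \<ge> 2"]], goal_cases)
      case 1 show ?case using sub by blast
    next
      case 2 show ?case using sub by blast
    next
      case 3 show ?case using sub by blast
    next
      case 4 show ?case using Ws(3) by blast
    next
      case 5 show ?case using Ws(3) by blast
    next
      case 6 show ?case using sub[of "j - 1"] ejj(1) by simp
    next
      case 7 show ?case using sub[of "j - 1"] ejj(1) by simp
    next
      case 8 show ?case using sub[of "k - 1"] by blast
    next
      case 9 show ?case using mono unfolding submod_le_def by blast
    next
      case 10 show ?case using W(2) unfolding submod_le_def by blast
    next
      case 11 show ?case using W(3) ekk(1) unfolding submod_le_def by simp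
    next
      case 12 show ?case using ejj by simp
    next
      case 13 show ?case by (rule dW0)
    next
      case 14 show ?case by (rule dW1)
    next
      case 15 show ?case using h2 by blast
    next
      case (16 Z)
      then show ?case by (elim exE conjE) (rule that; assumption)
    qed
    have "subquot_has_submod sa sb r A B (socfilt r A B (j - 1)) (socfilt r A B (k - 1)) (dimvec j c b)"
      unfolding subquot_has_submod_def
    proof (intro exI[of _ "(Z, snd W)"] conjI)
      show "is_submod sa sb r A B (Z, snd W)" unfolding is_submod_def using Ws Z by auto
      show "submod_le (socfilt r A B (j - 1)) (Z, snd W)"
        unfolding submod_le_def using W(2) ejj(1) Z(2) unfolding submod_le_def by simp
      show "submod_le (Z, snd W) (socfilt r A B (k - 1))"
        unfolding submod_le_def using W(3) ekk(1) Z(3) unfolding submod_le_def by simp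
      show "dim_at sa sb 0 (Z, snd W) = dim_at sa sb 0 (socfilt r A B (j - 1)) + dimvec j c b 0"
        using Z(5) vj by (simp add: dim_at_def dimvec_def)
      show "dim_at sa sb 1 (Z, snd W) = dim_at sa sb 1 (socfilt r A B (j - 1)) + dimvec j c b 1"
        using dW1 ejj(1) vj by (simp add: dim_at_def dimvec_def)
    qed
    then show ?thesis using Z(6,7) by blast
  qed
qed

end
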